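(* Let $S$ be a set of patterns and $f_n$ the number of rooted labeled forests on $[n]$ avoiding $S$. Then $\lim_{n\to\infty}\frac{f_n^{1/n}}{n}=0$ if and only if $S$ contains the pattern $12\cdots k$ and the pattern $\ell(\ell-1)\cdots 1$ for some positive integers $k$ and $\ell$.
   Context: A rooted labeled forest on $[n]$ is an unordered forest on $n$ vertices, each component with a distinguished root, with distinct labels from $[n]$. A pattern of length $k$ is a permutation of $[k]$; an instance of it is a sequence of vertices $v_1,\dots,v_k$ with $v_i$ a strict ancestor of $v_{i+1}$ whose labels are in the same relative order as the pattern; a forest avoids $S$ if it contains no instance of any pattern in $S$. *)

theory Defs
  imports Complex_Main
begin

text \<open>A rooted labeled forest on [n] = {1..n} is encoded by its parent map
  par :: nat => nat, where par v = 0 means that v is a root (0 is not a vertex),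
  and par is 0 outside [n] (so the encoding is unique). Acyclicity: iterating
  par from any vertex eventually reaches 0.\<close>
definition is_forest :: "nat \<Rightarrow> (nat \<Rightarrow> nat) \<Rightarrow> bool" where
  "is_forest n par \<longleftrightarrow>
     (\<forall>v. v \<notin> {1..n} \<longrightarrow> par v = 0) \<and>
     (\<forall>v\<in>{1..n}. par v \<le> n) \<and>
     (\<forall>v\<in>{1..n}. \<exists>m. (par ^^ m) v = 0)"

definition strict_anc :: "(nat \<Rightarrow> nat) \<Rightarrow> nat \<Rightarrow> nat \<Rightarrow> bool" where
  "strict_anc par u w \<longleftrightarrow> u \<noteq> 0 \<and> (\<exists>m\<ge>1. (par ^^ m) w = u)"

definition is_pattern :: "nat list \<Rightarrow> bool" where
  "is_pattern p \<longleftrightarrow> length p \<ge> 1 \<and> distinct p \<and> set p = {1..length p}"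

definition is_instance :: "nat \<Rightarrow> (nat \<Rightarrow> nat) \<Rightarrow> nat list \<Rightarrow> nat list \<Rightarrow> bool" where
  "is_instance n par p vs \<longleftrightarrow>
     length vs = length p \<and> set vs \<subseteq> {1..n} \<and>
     (\<forall>i. Suc i < length vs \<longrightarrow> strict_anc par (vs ! i) (vs ! Suc i)) \<and>
     (\<forall>i<length p. \<forall>j<length p. p ! i < p ! j \<longleftrightarrow> vs ! i < vs ! j)"

definition avoids :: "nat \<Rightarrow> (nat \<Rightarrow> nat) \<Rightarrow> nat list set \<Rightarrow> bool" where
  "avoids n par S \<longleftrightarrow> (\<forall>p\<in>S. \<not> (\<exists>vs. is_instance n par p vs))"

definition num_avoiding :: "nat list set \<Rightarrow> nat \<Rightarrow> nat" where
  "num_avoiding S n = card {par. is_forest n par \<and> avoids n par S}"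

end

theory Submission
  imports Defs "HOL-Library.FuncSet"
begin

lemma card_funs:
  assumes "finite A"
  shows "card {f. \<forall>x. (x \<in> A \<longrightarrow> f x \<in> B x) \<and> (x \<notin> A \<longrightarrow> f x = d)} = (\<Prod>x\<in>A. card (B x))"
proof -
  let ?S = "{f. \<forall>x. (x \<in> A \<longrightarrow> f x \<in> B x) \<and> (x \<notin> A \<longrightarrow> f x = d)}"
  have "bij_betw (\<lambda>f. restrict f A) ?S (PiE A B)"
  proof (rule bij_betw_imageI)
    show "inj_on (\<lambda>f. restrict f A) ?S"
    proof (rule inj_onI)
      fix f g assume "f \<in> ?S" "g \<in> ?S" "restrict f A = restrict g A"
      then show "f = g" by (auto simp: fun_eq_iff restrict_def) (metis)
    qed
    show "(\<lambda>f. restrict f A) ` ?S = PiE A B"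
    proof
      show "(\<lambda>f. restrict f A) ` ?S \<subseteq> PiE A B" by auto
      show "PiE A B \<subseteq> (\<lambda>f. restrict f A) ` ?S"
      proof
        fix g assume g: "g \<in> PiE A B"
        let ?f = "\<lambda>x. if x \<in> A then g x else d"
        have "?f \<in> ?S" using g by auto
        moreover have "restrict ?f A = g" using g by (auto simp: fun_eq_iff restrict_def PiE_def extensional_def)
        ultimately show "g \<in> (\<lambda>f. restrict f A) ` ?S" by (metis (no_types, lifting) image_eqI)
      qed
    qed
  qed
  then have "card ?S = card (PiE A B)" by (rule bij_betw_same_card)
  also have "\<dots> = (\<Prod>x\<in>A. card (B x))" using assms by (rule card_PiE)
  finally show ?thesis .
qed

lemma fact_lower: "real n / exp 1 \<le> root n (fact n)" if "n > 0" for n :: nat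
proof -
  have "(\<lambda>m. real n ^ m /\<^sub>R fact m) sums exp (real n)" by (rule exp_converges)
  then have "sum (\<lambda>m. real n ^ m /\<^sub>R fact m) {n} \<le> exp (real n)"
    using sum_le_suminf[of "\<lambda>m. real n ^ m /\<^sub>R fact m" "{n}"] sums_unique sums_summable by fastforce
  then have "real n ^ n / fact n \<le> exp (real n)" by (simp add: divide_inverse mult.commute)
  then have "real n ^ n \<le> exp (real n) * fact n" by (simp add: divide_le_eq)
  then have "(real n / exp 1) ^ n \<le> fact n"
    by (simp add: power_divide divide_le_eq exp_of_nat_mult[symmetric] mult.commute)
  then have "root n ((real n / exp 1) ^ n) \<le> root n (fact n)"
    using that by (simp add: real_root_le_iff)
  then show ?thesis using that by (simp add: real_root_pos2)
qed
fun cseq :: "real \<Rightarrow> real \<Rightarrow> nat \<Rightarrow> real" where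
  "cseq h T 0 = 1 / h"
| "cseq h T (Suc i) = exp (- T / cseq h T i)"

lemma cseq_pos: "h > 0 \<Longrightarrow> cseq h T i > 0"
  by (induction i) auto

lemma pow_exp_ln: "x > 0 \<Longrightarrow> x ^ k = exp (real k * ln x)"
  by (simp add: exp_of_nat_mult)

lemma AL:
  fixes h :: nat and \<delta> :: real
  assumes h1: "h \<ge> 1" and dpos: "\<delta> > 0"
  shows "\<exists>N. \<forall>n\<ge>N. \<forall>a::nat\<Rightarrow>nat. a 0 = 1 \<longrightarrow> (\<forall>j\<in>{1..h}. a j \<le> n) \<longrightarrow>
           (\<Sum>j\<in>{1..h}. a j) = n \<longrightarrow> (\<Prod>j\<in>{1..h}. real (a (j-1)) ^ a j) \<le> (\<delta> * real n) ^ n"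
proof -
  define T where "T = - ln \<delta>"
  define m where "m = Min (cseq h T ` {0..h})"
  have hpos: "real h > 0" using h1 by simp
  have mpos: "m > 0" unfolding m_def using cseq_pos[of h] h1 by (subst Min_gr_iff) auto
  have mle: "\<And>i. i \<le> h \<Longrightarrow> m \<le> cseq h T i" unfolding m_def by (rule Min_le) auto
  obtain N :: nat where N: "real N > 1 / m" using reals_Archimedean2 by blast
  show ?thesis
  proof (intro exI allI impI)
    fix n :: nat and a :: "nat \<Rightarrow> nat"
    assume nN: "n \<ge> N" and a0: "a 0 = 1" and ab: "\<forall>j\<in>{1..h}. a j \<le> n" and asum: "(\<Sum>j\<in>{1..h}. a j) = n"
    have nm: "real n * m > 1" using N nN mpos
      by (smt (verit, ccfv_SIG) le_divide_eq_1_pos mult.commute of_nat_mono pos_divide_less_eq)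
    have npos: "real n > 0" using nm mpos
      by (smt (verit) mult_nonpos_nonneg of_nat_0_le_iff)
    show "(\<Prod>j\<in>{1..h}. real (a (j-1)) ^ a j) \<le> (\<delta> * real n) ^ n"
    proof (rule ccontr)
      assume "\<not> ?thesis"
      then have big: "(\<Prod>j\<in>{1..h}. real (a (j-1)) ^ a j) > (\<delta> * real n) ^ n" by simp
      have dn: "\<delta> * real n > 0" using dpos npos by simp
      then have "(\<Prod>j\<in>{1..h}. real (a (j-1)) ^ a j) \<noteq> 0" using big
        by (smt (verit) zero_less_power)
      then have nz: "\<And>j. j \<in> {1..h} \<Longrightarrow> a j > 0 \<Longrightarrow> a (j-1) > 0"
        by (auto simp: prod_zero_iff)
      have ale: "\<And>j. j \<in> {1..h} \<Longrightarrow> a (j-1) \<le> n"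
      proof -
        fix j assume j: "j \<in> {1..h}"
        show "a (j-1) \<le> n"
        proof (cases "j = 1")
          case True then show ?thesis using a0 npos by simp
        next
          case False then have "j - 1 \<in> {1..h}" using j by auto
          then show ?thesis using ab by blast
        qed
      qed
      define t where "t j = real (a j) * (ln (real n) - ln (real (a (j-1))))" for j
      have tnn: "t j \<ge> 0" if j: "j \<in> {1..h}" for j
      proof (cases "a j = 0")
        case True then show ?thesis by (simp add: t_def)
      next
        case False
        then have "a (j-1) > 0" using nz j by simp
        then have "ln (real (a (j-1))) \<le> ln (real n)" using ale[OF j] by simp
        then show ?thesis unfolding t_def by simp
      qed
      have peq: "(\<Prod>j\<in>{1..h}. real (a (j-1)) ^ a j) = exp (\<Sum>j\<in>{1..h}. real (a j) * ln (real (a (j-1))))"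
        unfolding exp_sum[OF finite_atLeastAtMost]
      proof (rule prod.cong[OF refl])
        fix j assume j: "j \<in> {1..h}"
        show "real (a (j-1)) ^ a j = exp (real (a j) * ln (real (a (j-1))))"
        proof (cases "a j = 0")
          case True then show ?thesis by simp
        next
          case False
          then have "a (j-1) > 0" using nz j by simp
          then show ?thesis by (simp add: pow_exp_ln)
        qed
      qed
      have deq: "(\<delta> * real n) ^ n = exp (real n * ln (\<delta> * real n))" using dn by (simp add: pow_exp_ln)
      have "(\<Sum>j\<in>{1..h}. real (a j) * ln (real (a (j-1)))) > real n * ln (\<delta> * real n)"
        using big unfolding peq deq by simp
      also have "real n * ln (\<delta> * real n) = - real n * T + real n * ln (real n)"
        using dpos npos by (simp add: ln_mult T_def algebra_simps)
      finally have s1: "(\<Sum>j\<in>{1..h}. real (a j) * ln (real (a (j-1)))) > - real n * T + real n * ln (real n)" .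
      have "(\<Sum>j\<in>{1..h}. t j) = (\<Sum>j\<in>{1..h}. real (a j)) * ln (real n) - (\<Sum>j\<in>{1..h}. real (a j) * ln (real (a (j-1))))"
        unfolding t_def by (simp only: right_diff_distrib sum_subtractf sum_distrib_right)
      also have "(\<Sum>j\<in>{1..h}. real (a j)) = real n" using asum by (metis of_nat_sum)
      finally have tsum: "(\<Sum>j\<in>{1..h}. t j) < real n * T" using s1 by simp
      have tlt: "t j < real n * T" if j: "j \<in> {1..h}" for j
      proof -
        have "t j \<le> (\<Sum>j\<in>{1..h}. t j)" by (rule member_le_sum) (use j tnn in auto)
        then show ?thesis using tsum by simp
      qed
      obtain j0 where j0: "j0 \<in> {1..h}" "a j0 * h \<ge> n"
      proof (rule ccontr)
        assume "\<not> thesis"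
        then have lt: "\<forall>j\<in>{1..h}. a j * h < n" using that by force
        have "(\<Sum>j\<in>{1..h}. a j * h) < (\<Sum>j\<in>{1..h}. n)"
          by (rule sum_strict_mono) (use lt h1 in auto)
        then show False using asum by (simp add: sum_distrib_right[symmetric])
      qed
      have claim: "i \<le> j0 \<Longrightarrow> real (a (j0 - i)) \<ge> cseq h T i * real n" for i
      proof (induction i)
        case 0
        have "real (a j0) * real h \<ge> real n" using j0(2) by (metis of_nat_le_iff of_nat_mult)
        then show ?case using hpos by (simp add: field_simps)
      next
        case (Suc i)
        define j where "j = j0 - i"
        have j: "j \<in> {1..h}" "j - 1 = j0 - Suc i" using Suc.prems j0(1) by (auto simp: j_def)
        define c where "c = cseq h T i"
        have cpos: "c > 0" using cseq_pos h1 by (simp add: c_def)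
        have ajc: "real (a j) \<ge> c * real n" using Suc by (simp add: j_def c_def)
        have "c * real n > 0" using cpos npos by simp
        then have "real (a j) > 0" using ajc by linarith
        then have "a j > 0" by simp
        then have aj1: "a (j-1) > 0" using nz j(1) by simp
        define L where "L = ln (real n) - ln (real (a (j-1)))"
        have L0: "L \<ge> 0" using ale[OF j(1)] aj1 by (simp add: L_def)
        have "c * real n * L \<le> real (a j) * L" using ajc L0 by (simp add: mult_right_mono)
        also have "\<dots> < real n * T" using tlt[OF j(1)] by (simp add: t_def L_def)
        finally have "c * real n * L < real n * T" .
        then have "L < T / c" using cpos npos
          by (simp add: pos_less_divide_eq mult.commute mult.left_commute)
        then have "ln (real n) - T / c < ln (real (a (j-1)))" unfolding L_def by simp
        then have "exp (ln (real n) - T / c) < real (a (j-1))"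
          using aj1 by (metis exp_less_cancel_iff exp_ln of_nat_0_less_iff)
        moreover have "exp (ln (real n) - T / c) = exp (- T / c) * real n"
          using npos by (simp add: exp_diff exp_minus field_simps)
        ultimately show ?case using j(2) by (simp add: c_def)
      qed
      from claim[of j0] have "cseq h T j0 * real n \<le> 1" using a0 by simp
      moreover have "m * real n \<le> cseq h T j0 * real n" using mle[of j0] j0(1) npos by simp
      ultimately show False using nm by (simp add: mult.commute)
    qed
  qed
qed
lemma ES:
  fixes xs :: "nat list"
  shows "length xs \<ge> 2^(k+l) \<Longrightarrow> distinct xs \<Longrightarrow> sorted_wrt Q xs \<Longrightarrow>
    \<exists>ys. sorted_wrt Q ys \<and> set ys \<subseteq> set xs \<and>
      ((length ys = k \<and> sorted_wrt (<) ys) \<or> (length ys = l \<and> sorted_wrt (>) ys))"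
proof (induction "k+l" arbitrary: k l xs rule: less_induct)
  case less
  show ?case
  proof (cases "k = 0 \<or> l = 0")
    case True
    then show ?thesis by (intro exI[of _ "[]"]) auto
  next
    case False
    then obtain k' l' where kl: "k = Suc k'" "l = Suc l'" by (meson not0_implies_Suc)
    have "length xs \<ge> 1" using less.prems(1) by (metis le_trans one_le_numeral one_le_power)
    then obtain x rest where xs: "xs = x # rest" by (cases xs) auto
    define G where "G = filter (\<lambda>y. x < y) rest"
    define Lo where "Lo = filter (\<lambda>y. \<not> x < y) rest"
    have lens: "length G + length Lo = length rest" unfolding G_def Lo_def by (rule sum_length_filter_compl)
    have "length rest + 1 \<ge> 2 ^ (k+l)" using less.prems(1) xs by simp
    moreover have "(2::nat) ^ (k+l) = 2 ^ (k'+l) + 2 ^ (k+l')" using kl by simp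
    ultimately have "length G \<ge> 2 ^ (k'+l) \<or> length Lo \<ge> 2 ^ (k+l')" using lens by linarith
    moreover have dG: "distinct G" "distinct Lo" using less.prems(2) xs by (auto simp: G_def Lo_def)
    moreover have sG: "sorted_wrt Q G" "sorted_wrt Q Lo" using less.prems(3) xs
      by (auto simp: G_def Lo_def sorted_wrt_filter)
    moreover have Qx: "\<forall>y\<in>set rest. Q x y" using less.prems(3) xs by simp
    moreover have xn: "x \<notin> set rest" using less.prems(2) xs by simp
    ultimately show ?thesis
    proof (elim disjE)
      assume "length G \<ge> 2 ^ (k'+l)"
      from less.hyps[of k' l G, OF _ this dG(1) sG(1)] kl obtain ys where
        ys: "sorted_wrt Q ys" "set ys \<subseteq> set G"
          "(length ys = k' \<and> sorted_wrt (<) ys) \<or> (length ys = l \<and> sorted_wrt (>) ys)" by auto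
      have yG: "\<forall>y\<in>set ys. y \<in> set rest \<and> x < y" using ys(2) by (auto simp: G_def)
      show ?thesis
      proof (cases "length ys = k' \<and> sorted_wrt (<) ys")
        case True
        then show ?thesis using ys yG Qx xs kl by (intro exI[of _ "x # ys"]) auto
      next
        case False
        then show ?thesis using ys yG xs by (intro exI[of _ ys]) auto
      qed
    next
      assume "length Lo \<ge> 2 ^ (k+l')"
      from less.hyps[of k l' Lo, OF _ this dG(2) sG(2)] kl obtain ys where
        ys: "sorted_wrt Q ys" "set ys \<subseteq> set Lo"
          "(length ys = k \<and> sorted_wrt (<) ys) \<or> (length ys = l' \<and> sorted_wrt (>) ys)" by auto
      have yG: "\<forall>y\<in>set ys. y \<in> set rest \<and> y < x"
      proof
        fix y assume "y \<in> set ys"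
        then have "y \<in> set rest" "\<not> x < y" using ys(2) by (auto simp: Lo_def)
        moreover have "y \<noteq> x" using xn calculation(1) by blast
        ultimately show "y \<in> set rest \<and> y < x" by simp
      qed
      show ?thesis
      proof (cases "length ys = l' \<and> sorted_wrt (>) ys")
        case True
        then show ?thesis using ys yG Qx xs kl by (intro exI[of _ "x # ys"]) auto
      next
        case False
        then show ?thesis using ys yG xs by (intro exI[of _ ys]) auto
      qed
    qed
  qed
qed

definition ht :: "(nat \<Rightarrow> nat) \<Rightarrow> nat \<Rightarrow> nat" where
  "ht par v = (LEAST m. (par ^^ m) v = 0)"

lemma ht_0: "is_forest n par \<Longrightarrow> v \<in> {1..n} \<Longrightarrow> (par ^^ ht par v) v = 0"
  unfolding ht_def is_forest_def by (rule LeastI_ex) blast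

lemma ht_min: "i < ht par v \<Longrightarrow> (par ^^ i) v \<noteq> 0"
  unfolding ht_def by (rule not_less_Least)

lemma ht_pos: "is_forest n par \<Longrightarrow> v \<in> {1..n} \<Longrightarrow> ht par v \<ge> 1"
  using ht_0[of n par v] by (cases "ht par v") auto

lemma par0: "is_forest n par \<Longrightarrow> par 0 = 0"
  unfolding is_forest_def by auto

lemma iter_in: "is_forest n par \<Longrightarrow> v \<in> {1..n} \<Longrightarrow> i < ht par v \<Longrightarrow> (par ^^ i) v \<in> {1..n}"
proof (induction i)
  case 0 then show ?case by simp
next
  case (Suc i)
  then have "(par ^^ i) v \<in> {1..n}" by simp
  then have "par ((par ^^ i) v) \<le> n" using Suc.prems(1) unfolding is_forest_def by blast
  moreover have "(par ^^ Suc i) v \<noteq> 0" using ht_min Suc.prems(3) by blast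
  ultimately show ?case by auto
qed

lemma iter_distinct:
  assumes "is_forest n par" "v \<in> {1..n}" "e2 < e1" "e1 < ht par v"
  shows "(par ^^ e1) v \<noteq> (par ^^ e2) v"
proof
  assume eq: "(par ^^ e1) v = (par ^^ e2) v"
  define m where "m = ht par v"
  have "(par ^^ (m - e1 + e2)) v = (par ^^ (m - e1)) ((par ^^ e2) v)" by (simp add: funpow_add)
  also have "\<dots> = (par ^^ (m - e1)) ((par ^^ e1) v)" using eq by simp
  also have "\<dots> = (par ^^ (m - e1 + e1)) v" by (simp add: funpow_add)
  also have "m - e1 + e1 = m" using assms(4) m_def by simp
  also have "(par ^^ m) v = 0" using ht_0 assms(1,2) m_def by simp
  finally have "(par ^^ (m - e1 + e2)) v = 0" .
  moreover have "m - e1 + e2 < m" using assms(3,4) m_def by simp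
  ultimately show False using ht_min m_def by blast
qed

lemma ht_par:
  assumes "is_forest n par" "v \<in> {1..n}" "ht par v \<ge> 2"
  shows "ht par (par v) = ht par v - 1"
proof -
  define m where "m = ht par v"
  have "(par ^^ (m - 1)) (par v) = (par ^^ Suc (m - 1)) v" by (simp add: funpow_Suc_right del: funpow.simps)
  also have "Suc (m - 1) = m" using assms(3) m_def by simp
  finally have P: "(par ^^ (m - 1)) (par v) = 0" using ht_0 assms(1,2) m_def by simp
  have "\<And>y. (par ^^ y) (par v) = 0 \<Longrightarrow> m - 1 \<le> y"
  proof (rule ccontr)
    fix y assume y: "(par ^^ y) (par v) = 0" "\<not> m - 1 \<le> y"
    have "(par ^^ Suc y) v = (par ^^ y) (par v)" by (simp add: funpow_Suc_right del: funpow.simps)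
    moreover have "Suc y < ht par v" using y(2) m_def by simp
    ultimately show False using y(1) ht_min[of "Suc y" par v] by simp
  qed
  then show ?thesis unfolding ht_def[of par "par v"] using P m_def by (intro Least_equality) auto
qed

lemma ht_1: "is_forest n par \<Longrightarrow> v \<in> {1..n} \<Longrightarrow> ht par v = 1 \<Longrightarrow> par v = 0"
  using ht_0[of n par v] by simp

lemma ht_2: "ht par v \<ge> 2 \<Longrightarrow> par v \<noteq> 0"
  using ht_min[of 1 par v] by simp

lemma inst_inc:
  assumes "sorted_wrt (strict_anc par) ys" "set ys \<subseteq> {1..n}" "length ys = k" "sorted_wrt (<) ys"
  shows "is_instance n par [1..<k+1] ys"
  unfolding is_instance_def
proof (intro conjI allI impI)
  show "length ys = length [1..<k+1]" using assms by simp
  show "set ys \<subseteq> {1..n}" by fact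
  fix i assume "Suc i < length ys"
  then show "strict_anc par (ys ! i) (ys ! Suc i)" using assms(1) sorted_wrt_nth_less by blast
next
  fix i j assume ij: "i < length [1..<k+1]" "j < length [1..<k+1]"
  then have "[1..<k+1] ! i = 1 + i" "[1..<k+1] ! j = 1 + j" by (simp_all del: upt_Suc)
  moreover have ij': "i < length ys" "j < length ys" using ij assms(3) by (simp_all del: upt_Suc)
  moreover have "i < j \<longleftrightarrow> ys ! i < ys ! j"
  proof
    assume "i < j" then show "ys ! i < ys ! j" using sorted_wrt_nth_less[OF assms(4)] ij' by blast
  next
    assume h: "ys ! i < ys ! j"
    show "i < j"
    proof (rule ccontr)
      assume "\<not> i < j"
      then have "j < i \<or> j = i" by auto
      then show False using h sorted_wrt_nth_less[OF assms(4), of j i] ij' by auto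
    qed
  qed
  ultimately show "[1..<k+1] ! i < [1..<k+1] ! j \<longleftrightarrow> ys ! i < ys ! j" by simp
qed

lemma inst_dec:
  assumes "sorted_wrt (strict_anc par) ys" "set ys \<subseteq> {1..n}" "length ys = l" "sorted_wrt (>) ys"
  shows "is_instance n par (rev [1..<l+1]) ys"
  unfolding is_instance_def
proof (intro conjI allI impI)
  show "length ys = length (rev [1..<l+1])" using assms by simp
  show "set ys \<subseteq> {1..n}" by fact
  fix i assume "Suc i < length ys"
  then show "strict_anc par (ys ! i) (ys ! Suc i)" using assms(1) sorted_wrt_nth_less by blast
next
  fix i j assume ij: "i < length (rev [1..<l+1])" "j < length (rev [1..<l+1])"
  then have "rev [1..<l+1] ! i = l - i" "rev [1..<l+1] ! j = l - j" by (simp_all del: upt_Suc add: rev_nth)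
  moreover have ij': "i < length ys" "j < length ys" using ij assms(3) by (simp_all del: upt_Suc)
  moreover have "j < i \<longleftrightarrow> ys ! i < ys ! j"
  proof
    assume "j < i" then show "ys ! i < ys ! j" using sorted_wrt_nth_less[OF assms(4), of j i] ij' by blast
  next
    assume h: "ys ! i < ys ! j"
    show "j < i"
    proof (rule ccontr)
      assume "\<not> j < i"
      then have "i < j \<or> j = i" by auto
      then show False using h sorted_wrt_nth_less[OF assms(4), of i j] ij' by auto
    qed
  qed
  moreover have "l - i < l - j \<longleftrightarrow> j < i" using ij' assms(3) by auto
  ultimately show "rev [1..<l+1] ! i < rev [1..<l+1] ! j \<longleftrightarrow> ys ! i < ys ! j"
    by (metis (no_types))
qed

lemma ht_bound:
  assumes F: "is_forest n par" and av: "avoids n par S"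
    and inc: "[1..<k+1] \<in> S" and dec: "rev [1..<l+1] \<in> S" and v: "v \<in> {1..n}"
  shows "ht par v < 2^(k+l)"
proof (rule ccontr)
  define R :: nat where "R = 2^(k+l)"
  assume "\<not> ht par v < 2^(k+l)"
  then have Rh: "R \<le> ht par v" by (simp add: R_def)
  define cs where "cs = map (\<lambda>i. (par ^^ (R - 1 - i)) v) [0..<R]"
  have len: "length cs = R" by (simp add: cs_def)
  have csn: "i < R \<Longrightarrow> cs ! i = (par ^^ (R - 1 - i)) v" for i by (simp add: cs_def)
  have "distinct cs"
    unfolding distinct_conv_nth len
  proof (intro allI impI)
    fix i j assume ij: "i < R" "j < R" "i \<noteq> j"
    show "cs ! i \<noteq> cs ! j"
    proof (cases "i < j")
      case True then show ?thesis using csn ij iter_distinct[OF F v, of "R-1-j" "R-1-i"] Rh by simp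
    next
      case False
      then have "(par ^^ (R-1-j)) v \<noteq> (par ^^ (R-1-i)) v" using ij iter_distinct[OF F v, of "R-1-i" "R-1-j"] Rh by simp
      then have "cs ! j \<noteq> cs ! i" using csn ij by simp
      then show ?thesis by (rule not_sym)
    qed
  qed
  moreover have setcs: "set cs \<subseteq> {1..n}" using iter_in[OF F v] Rh by (auto simp: cs_def)
  moreover have "sorted_wrt (strict_anc par) cs"
    unfolding sorted_wrt_iff_nth_less len
  proof (intro allI impI)
    fix i j assume ij: "i < j" "j < R"
    have "cs ! j = (par ^^ (R - 1 - j)) v" using csn ij by simp
    then have "(par ^^ (j - i)) (cs ! j) = (par ^^ (j - i + (R - 1 - j))) v" by (simp only: funpow_add comp_apply)
    also have "j - i + (R - 1 - j) = R - 1 - i" using ij by simp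
    finally have "(par ^^ (j - i)) (cs ! j) = cs ! i" using csn ij by simp
    moreover have "cs ! i \<in> set cs" using ij len by simp
    then have "cs ! i \<in> {1..n}" using setcs by blast
    then have "cs ! i \<noteq> 0" by simp
    ultimately show "strict_anc par (cs ! i) (cs ! j)" unfolding strict_anc_def using ij
      by (intro conjI exI[of _ "j-i"]) auto
  qed
  moreover have "length cs \<ge> 2^(k+l)" using len R_def by simp
  ultimately obtain ys where ys: "sorted_wrt (strict_anc par) ys" "set ys \<subseteq> set cs"
      "(length ys = k \<and> sorted_wrt (<) ys) \<or> (length ys = l \<and> sorted_wrt (>) ys)"
    using ES[of k l cs "strict_anc par"] by blast
  have ysn: "set ys \<subseteq> {1..n}" using ys(2) setcs by blast
  from ys(3) show False
  proof
    assume "length ys = k \<and> sorted_wrt (<) ys"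
    then have "is_instance n par [1..<k+1] ys" using inst_inc ys(1) ysn by blast
    then show False using av inc unfolding avoids_def by blast
  next
    assume "length ys = l \<and> sorted_wrt (>) ys"
    then have "is_instance n par (rev [1..<l+1]) ys" using inst_dec ys(1) ysn by blast
    then show False using av dec unfolding avoids_def by blast
  qed
qed

lemma pattern_inc:
  assumes "is_pattern p" "\<forall>i. Suc i < length p \<longrightarrow> p ! i < p ! Suc i"
  shows "p = [1..<length p + 1]"
proof -
  have "sorted_wrt (<) p" using assms(2) by (simp add: sorted_wrt_iff_nth_Suc_transp)
  then have "sorted p" by (simp add: strict_sorted_iff)
  moreover have "distinct p" "set p = {1..length p}" using assms(1) by (auto simp: is_pattern_def)
  moreover have "set [1..<length p + 1] = {1..length p}" "sorted [1..<length p + 1]" "distinct [1..<length p + 1]"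
    by (auto simp del: upt_Suc)
  ultimately show ?thesis using sorted_distinct_set_unique by metis
qed

lemma pattern_dec:
  assumes "is_pattern p" "\<forall>i. Suc i < length p \<longrightarrow> p ! i > p ! Suc i"
  shows "p = rev [1..<length p + 1]"
proof -
  have "\<forall>i. Suc i < length (rev p) \<longrightarrow> rev p ! i < rev p ! Suc i"
  proof (intro allI impI)
    fix i assume i: "Suc i < length (rev p)"
    define j where "j = length p - Suc (Suc i)"
    have "rev p ! i = p ! Suc j" "rev p ! Suc i = p ! j" using i by (auto simp: rev_nth j_def Suc_diff_Suc)
    moreover have "Suc j < length p" using i by (simp add: j_def)
    ultimately show "rev p ! i < rev p ! Suc i" using assms(2) by simp
  qed
  moreover have "is_pattern (rev p)" using assms(1) by (simp add: is_pattern_def)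
  ultimately have "rev p = [1..<length (rev p) + 1]" by (rule pattern_inc[rotated])
  then show ?thesis by (metis length_rev rev_rev_ident)
qed

definition Fset :: "nat \<Rightarrow> (nat \<Rightarrow> nat) set" where
  "Fset n = {f. \<forall>x. (x \<in> {1..n} \<longrightarrow> f x \<in> {0..n}) \<and> (x \<notin> {1..n} \<longrightarrow> f x = 0)}"

lemma finite_Fset: "finite (Fset n)"
  unfolding Fset_def by (rule finite_set_of_finite_funs) auto

lemma forest_Fset: "is_forest n par \<Longrightarrow> par \<in> Fset n"
  unfolding is_forest_def Fset_def by auto

lemma finite_avoid: "finite {par. is_forest n par \<and> avoids n par S}"
  by (rule finite_subset[OF _ finite_Fset[of n]]) (auto simp: forest_Fset)

lemma fact_avoid:
  assumes pats: "\<forall>p\<in>S. is_pattern p" and no: "\<not> (\<exists>k>0. [1..<k+1] \<in> S) \<or> \<not> (\<exists>l>0. rev [1..<l+1] \<in> S)"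
  shows "fact n \<le> num_avoiding S n"
  using no
proof
  assume no: "\<not> (\<exists>k>0. [1..<k+1] \<in> S)"
  define I where "I = {par. \<forall>v. (v \<in> {1..n} \<longrightarrow> par v \<in> {0..<v}) \<and> (v \<notin> {1..n} \<longrightarrow> par v = 0)}"
  have "card I = (\<Prod>v\<in>{1..n}. card {0..<v})" unfolding I_def by (rule card_funs) simp
  also have "\<dots> = \<Prod>{1..n}" by simp
  finally have cI: "card I = fact n" by (simp add: fact_prod)
  have "I \<subseteq> {par. is_forest n par \<and> avoids n par S}"
  proof
    fix par assume "par \<in> I"
    then have P: "\<And>v. v \<in> {1..n} \<Longrightarrow> par v < v" "\<And>v. v \<notin> {1..n} \<Longrightarrow> par v = 0" by (auto simp: I_def)
    have ex: "\<exists>m. (par ^^ m) v = 0" for v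
    proof (induction v rule: less_induct)
      case (less v)
      show ?case
      proof (cases "v \<in> {1..n}")
        case True
        then have "par v < v" using P(1) by blast
        then obtain m where "(par ^^ m) (par v) = 0" using less.IH by blast
        then have "(par ^^ Suc m) v = 0" by (simp add: funpow_Suc_right del: funpow.simps)
        then show ?thesis by blast
      next
        case False
        then have "(par ^^ 1) v = 0" using P by simp
        then show ?thesis by blast
      qed
    qed
    have F: "is_forest n par" unfolding is_forest_def
    proof (intro conjI ballI allI impI)
      fix v assume "v \<notin> {1..n}" then show "par v = 0" using P(2) by blast
    next
      fix v assume v: "v \<in> {1..n}"
      then have "par v < v" using P(1) by blast
      then show "par v \<le> n" using v by simp
    next
      fix v show "\<exists>m. (par ^^ m) v = 0" by (rule ex)
    qed
    have le: "par x \<le> x" for x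
    proof (cases "x \<in> {1..n}")
      case True then show ?thesis using P(1)[of x] by simp
    next
      case False then show ?thesis using P(2)[of x] by simp
    qed
    have lem: "(par ^^ m) x \<le> x" for m x
    proof (induction m)
      case 0 then show ?case by simp
    next
      case (Suc m)
      have "(par ^^ Suc m) x = par ((par ^^ m) x)" by simp
      then show ?case using le[of "(par ^^ m) x"] Suc.IH by linarith
    qed
    have anc: "u < w" if "strict_anc par u w" "w \<in> {1..n}" for u w
    proof -
      have ex1: "\<exists>m\<ge>1. (par ^^ m) w = u" using that(1) unfolding strict_anc_def by (rule conjunct2)
      then obtain m where m: "m \<ge> 1" "(par ^^ m) w = u" by auto
      define m' where "m' = m - 1"
      have "m = Suc m'" using m(1) by (simp add: m'_def)
      then have "u = (par ^^ m') (par w)" using m by (simp add: funpow_Suc_right del: funpow.simps)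
      then have "u \<le> par w" using lem by simp
      then show ?thesis using P(1)[OF that(2)] by simp
    qed
    have "avoids n par S" unfolding avoids_def
    proof (intro ballI notI)
      fix p assume pS: "p \<in> S" and "\<exists>vs. is_instance n par p vs"
      then obtain vs where vs: "is_instance n par p vs" by blast
      have V1: "length vs = length p" and V2: "set vs \<subseteq> {1..n}"
        and V3: "\<And>i. Suc i < length vs \<Longrightarrow> strict_anc par (vs ! i) (vs ! Suc i)"
        and V4: "\<And>i j. i < length p \<Longrightarrow> j < length p \<Longrightarrow> p ! i < p ! j \<longleftrightarrow> vs ! i < vs ! j"
        using vs unfolding is_instance_def by blast+
      have "\<forall>i. Suc i < length p \<longrightarrow> p ! i < p ! Suc i"
      proof (intro allI impI)
        fix i assume i: "Suc i < length p"
        then have a1: "strict_anc par (vs ! i) (vs ! Suc i)" using V1 V3 by simp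
        have "vs ! Suc i \<in> set vs" using i V1 by simp
        then have "vs ! Suc i \<in> {1..n}" using V2 by blast
        then have "vs ! i < vs ! Suc i" using anc a1 by blast
        then show "p ! i < p ! Suc i" using V4[of i "Suc i"] i by simp
      qed
      then have "p = [1..<length p + 1]" using pattern_inc pats pS by blast
      moreover have "length p > 0" using pats pS by (auto simp: is_pattern_def)
      ultimately show False using no pS by metis
    qed
    then show "par \<in> {par. is_forest n par \<and> avoids n par S}" using F by simp
  qed
  then have "card I \<le> num_avoiding S n" unfolding num_avoiding_def by (rule card_mono[OF finite_avoid])
  then show ?thesis using cI by (metis of_nat_fact of_nat_le_iff)
next
  assume no: "\<not> (\<exists>l>0. rev [1..<l+1] \<in> S)"
  define I where "I = {par. \<forall>v. (v \<in> {1..n} \<longrightarrow> par v \<in> insert 0 {v<..n}) \<and> (v \<notin> {1..n} \<longrightarrow> par v = 0)}"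
  have "card I = (\<Prod>v\<in>{1..n}. card (insert 0 {v<..n}))" unfolding I_def by (rule card_funs) simp
  also have "\<dots> = (\<Prod>v\<in>{1..n}. n + 1 - v)" by (intro prod.cong refl) auto
  also have "\<dots> = \<Prod>{1..n}" using prod.atLeastAtMost_rev[of "\<lambda>i. i" 1 n] by simp
  finally have cI: "card I = fact n" by (simp add: fact_prod)
  have "I \<subseteq> {par. is_forest n par \<and> avoids n par S}"
  proof
    fix par assume "par \<in> I"
    then have P: "\<And>v. v \<in> {1..n} \<Longrightarrow> par v = 0 \<or> (v < par v \<and> par v \<le> n)" "\<And>v. v \<notin> {1..n} \<Longrightarrow> par v = 0"
      by (auto simp: I_def)
    have ex: "\<exists>m. (par ^^ m) v = 0" for v
    proof (induction "n - v" arbitrary: v rule: less_induct)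
      case less
      show ?case
      proof (cases "v \<in> {1..n} \<and> par v \<noteq> 0")
        case True
        then have "n - par v < n - v" using P by fastforce
        then obtain m where "(par ^^ m) (par v) = 0" using less by blast
        then have "(par ^^ Suc m) v = 0" by (simp add: funpow_Suc_right del: funpow.simps)
        then show ?thesis by blast
      next
        case False
        then have "(par ^^ 1) v = 0" using P by auto
        then show ?thesis by blast
      qed
    qed
    have F: "is_forest n par" unfolding is_forest_def using P ex by fastforce
    have gt: "par x = 0 \<or> par x > x" for x using P by (cases "x \<in> {1..n}") auto
    have p00: "par 0 = 0" using P by simp
    have lem: "(par ^^ Suc m) x = 0 \<or> (par ^^ Suc m) x > x" for m x
    proof (induction m)
      case 0 then show ?case using gt by simp
    next
      case (Suc m)
      then show ?case using gt[of "(par ^^ Suc m) x"] p00 by auto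
    qed
    have anc: "w < u" if "strict_anc par u w" for u w
    proof -
      have ex1: "\<exists>m\<ge>1. (par ^^ m) w = u" using that(1) unfolding strict_anc_def by (rule conjunct2)
      have u0: "u \<noteq> 0" using that(1) unfolding strict_anc_def by (rule conjunct1)
      from ex1 obtain m where m: "m \<ge> 1" "(par ^^ m) w = u" by auto
      define m' where "m' = m - 1"
      have "m = Suc m'" using m(1) by (simp add: m'_def)
      then show ?thesis using lem[of m' w] m u0 by auto
    qed
    have "avoids n par S" unfolding avoids_def
    proof (intro ballI notI)
      fix p assume pS: "p \<in> S" and "\<exists>vs. is_instance n par p vs"
      then obtain vs where vs: "is_instance n par p vs" by blast
      have V1: "length vs = length p"
        and V3: "\<And>i. Suc i < length vs \<Longrightarrow> strict_anc par (vs ! i) (vs ! Suc i)"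
        and V4: "\<And>i j. i < length p \<Longrightarrow> j < length p \<Longrightarrow> p ! i < p ! j \<longleftrightarrow> vs ! i < vs ! j"
        using vs unfolding is_instance_def by blast+
      have "\<forall>i. Suc i < length p \<longrightarrow> p ! i > p ! Suc i"
      proof (intro allI impI)
        fix i assume i: "Suc i < length p"
        then have a1: "strict_anc par (vs ! i) (vs ! Suc i)" using V1 V3 by simp
        then have "vs ! i > vs ! Suc i" using anc by blast
        then show "p ! i > p ! Suc i" using V4[of "Suc i" i] i by simp
      qed
      then have "p = rev [1..<length p + 1]" using pattern_dec pats pS by blast
      moreover have "length p > 0" using pats pS by (auto simp: is_pattern_def)
      ultimately show False using no pS by metis
    qed
    then show "par \<in> {par. is_forest n par \<and> avoids n par S}" using F by simp
  qed
  then have "card I \<le> num_avoiding S n" unfolding num_avoiding_def by (rule card_mono[OF finite_avoid])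
  then show ?thesis using cI by (metis of_nat_fact of_nat_le_iff)
qed

lemma not_tendsto0:
  fixes X :: "nat \<Rightarrow> real"
  assumes "\<And>n. n \<ge> 1 \<Longrightarrow> X n \<ge> c" "c > 0"
  shows "\<not> X \<longlonglongrightarrow> 0"
proof
  assume "X \<longlonglongrightarrow> 0"
  from LIMSEQ_D[OF this assms(2)] obtain no where no: "\<forall>n\<ge>no. norm (X n - 0) < c" by blast
  have "norm (X (max no 1) - 0) < c" using no by simp
  moreover have "X (max no 1) \<ge> c" using assms(1) by simp
  ultimately show False by simp
qed


lemma UB:
  fixes h :: nat and \<epsilon> :: real
  assumes h1: "h \<ge> 1" and ep: "\<epsilon> > 0"
  shows "\<exists>N. \<forall>n\<ge>N. real (card {par. is_forest n par \<and> (\<forall>v\<in>{1..n}. ht par v \<le> h)}) \<le> (\<epsilon> * real n) ^ n"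
proof -
  define \<delta> where "\<delta> = \<epsilon> / real h"
  have dpos: "\<delta> > 0" using ep h1 by (simp add: \<delta>_def)
  obtain N where N: "\<forall>n\<ge>N. \<forall>a::nat\<Rightarrow>nat. a 0 = 1 \<longrightarrow> (\<forall>j\<in>{1..h}. a j \<le> n) \<longrightarrow>
           (\<Sum>j\<in>{1..h}. a j) = n \<longrightarrow> (\<Prod>j\<in>{1..h}. real (a (j-1)) ^ a j) \<le> (\<delta> * real n) ^ n"
    using AL[OF h1 dpos] by blast
  show ?thesis
  proof (intro exI allI impI)
    fix n assume nN: "n \<ge> N"
    define Lam where "Lam = {lam::nat\<Rightarrow>nat. \<forall>v. (v \<in> {1..n} \<longrightarrow> lam v \<in> {1..h}) \<and> (v \<notin> {1..n} \<longrightarrow> lam v = 0)}"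
    define Lev where "Lev lam j = (if j = 0 then {0} else {u \<in> {1..n}. lam u = j})" for lam :: "nat \<Rightarrow> nat" and j
    define G where "G lam = {par. \<forall>v. (v \<in> {1..n} \<longrightarrow> par v \<in> Lev lam (lam v - 1)) \<and> (v \<notin> {1..n} \<longrightarrow> par v = 0)}" for lam
    have finL: "finite Lam" unfolding Lam_def by (rule finite_set_of_finite_funs) auto
    have cardL: "card Lam = h ^ n" unfolding Lam_def by (subst card_funs) auto
    have LevSub: "Lev lam j \<subseteq> {0..n}" for lam j by (auto simp: Lev_def)
    have finG: "finite (G lam)" for lam
    proof (rule finite_subset[OF _ finite_Fset[of n]])
      show "G lam \<subseteq> Fset n" unfolding G_def Fset_def using LevSub by blast
    qed
    have boundG: "real (card (G lam)) \<le> (\<delta> * real n) ^ n" if lam: "lam \<in> Lam" for lam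
    proof -
      define a where "a j = card (Lev lam j)" for j
      have a0: "a 0 = 1" by (simp add: a_def Lev_def)
      have aj: "a j = card {v \<in> {1..n}. lam v = j}" if "j \<in> {1..h}" for j
        using that by (simp add: a_def Lev_def)
      have cG: "card (G lam) = (\<Prod>v\<in>{1..n}. a (lam v - 1))" unfolding G_def a_def by (rule card_funs) simp
      have img: "lam ` {1..n} \<subseteq> {1..h}" using lam by (auto simp: Lam_def)
      have "(\<Prod>v\<in>{1..n}. real (a (lam v - 1))) = (\<Prod>j\<in>{1..h}. \<Prod>v\<in>{v \<in> {1..n}. lam v = j}. real (a (lam v - 1)))"
        by (rule prod.group[symmetric]) (use img in auto)
      also have "\<dots> = (\<Prod>j\<in>{1..h}. real (a (j - 1)) ^ a j)"
      proof (rule prod.cong[OF refl])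
        fix j assume j: "j \<in> {1..h}"
        have "(\<Prod>v\<in>{v \<in> {1..n}. lam v = j}. real (a (lam v - 1))) = (\<Prod>v\<in>{v \<in> {1..n}. lam v = j}. real (a (j - 1)))"
          by (rule prod.cong) auto
        also have "\<dots> = real (a (j-1)) ^ card {v \<in> {1..n}. lam v = j}" by simp
        also have "card {v \<in> {1..n}. lam v = j} = a j" using aj[OF j] by simp
        finally show "(\<Prod>v\<in>{v \<in> {1..n}. lam v = j}. real (a (lam v - 1))) = real (a (j - 1)) ^ a j" .
      qed
      finally have eq: "(\<Prod>v\<in>{1..n}. real (a (lam v - 1))) = (\<Prod>j\<in>{1..h}. real (a (j - 1)) ^ a j)" .
      have ale: "\<forall>j\<in>{1..h}. a j \<le> n"
      proof
        fix j assume j: "j \<in> {1..h}"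
        have "card {v \<in> {1..n}. lam v = j} \<le> card {1..n}" by (rule card_mono) auto
        then show "a j \<le> n" using aj[OF j] by simp
      qed
      have "(\<Sum>j\<in>{1..h}. a j) = (\<Sum>j\<in>{1..h}. \<Sum>v\<in>{v \<in> {1..n}. lam v = j}. (1::nat))"
        using aj by (intro sum.cong refl) simp
      also have "\<dots> = (\<Sum>v\<in>{1..n}. (1::nat))" by (rule sum.group) (use img in auto)
      finally have asum: "(\<Sum>j\<in>{1..h}. a j) = n" by simp
      have "real (card (G lam)) = (\<Prod>v\<in>{1..n}. real (a (lam v - 1)))" using cG by simp
      also have "\<dots> = (\<Prod>j\<in>{1..h}. real (a (j - 1)) ^ a j)" by (rule eq)
      also have "\<dots> \<le> (\<delta> * real n) ^ n" using N nN a0 ale asum by blast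
      finally show ?thesis .
    qed
    have sub: "{par. is_forest n par \<and> (\<forall>v\<in>{1..n}. ht par v \<le> h)} \<subseteq> (\<Union>lam\<in>Lam. G lam)"
    proof
      fix par assume "par \<in> {par. is_forest n par \<and> (\<forall>v\<in>{1..n}. ht par v \<le> h)}"
      then have F: "is_forest n par" and hb: "\<forall>v\<in>{1..n}. ht par v \<le> h" by auto
      define lam where "lam v = (if v \<in> {1..n} then ht par v else 0)" for v
      have "lam \<in> Lam" unfolding Lam_def
      proof (intro CollectI allI conjI impI)
        fix v assume v: "v \<in> {1..n}"
        then show "lam v \<in> {1..h}" using ht_pos[OF F v] hb by (simp add: lam_def)
      next
        fix v assume "v \<notin> {1..n}" then show "lam v = 0" unfolding lam_def by auto
      qed
      moreover have "par \<in> G lam"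
        unfolding G_def
      proof (intro CollectI allI conjI impI)
        fix v assume v: "v \<in> {1..n}"
        show "par v \<in> Lev lam (lam v - 1)"
        proof (cases "ht par v \<ge> 2")
          case True
          then have "par v \<noteq> 0" by (rule ht_2)
          moreover have "par v \<le> n" using F v unfolding is_forest_def by blast
          ultimately have pv: "par v \<in> {1..n}" by simp
          have "lam (par v) = ht par v - 1" using ht_par[OF F v True] pv by (simp add: lam_def)
          then show ?thesis using pv True v by (simp add: Lev_def lam_def)
        next
          case False
          then have h1': "ht par v = 1" using ht_pos[OF F v] by simp
          then have "par v = 0" by (rule ht_1[OF F v])
          then show ?thesis using h1' v by (simp add: Lev_def lam_def)
        qed
      next
        fix v assume "v \<notin> {1..n}" then show "par v = 0" using F unfolding is_forest_def by blast
      qed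
      ultimately show "par \<in> (\<Union>lam\<in>Lam. G lam)" by blast
    qed
    have "card {par. is_forest n par \<and> (\<forall>v\<in>{1..n}. ht par v \<le> h)} \<le> card (\<Union>lam\<in>Lam. G lam)"
      by (rule card_mono) (use finL finG sub in auto)
    also have "\<dots> \<le> (\<Sum>lam\<in>Lam. card (G lam))" by (rule card_UN_le[OF finL])
    finally have "real (card {par. is_forest n par \<and> (\<forall>v\<in>{1..n}. ht par v \<le> h)}) \<le> real (\<Sum>lam\<in>Lam. card (G lam))"
      by (simp only: of_nat_le_iff)
    also have "\<dots> = (\<Sum>lam\<in>Lam. real (card (G lam)))" by simp
    also have "\<dots> \<le> (\<Sum>lam\<in>Lam. (\<delta> * real n) ^ n)" by (rule sum_mono) (use boundG in auto)
    also have "\<dots> = real h ^ n * (\<delta> * real n) ^ n" using cardL by simp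
    also have "\<dots> = (real h * (\<delta> * real n)) ^ n" by (simp add: power_mult_distrib)
    also have "real h * (\<delta> * real n) = \<epsilon> * real n" using h1 by (simp add: \<delta>_def field_simps)
    finally show "real (card {par. is_forest n par \<and> (\<forall>v\<in>{1..n}. ht par v \<le> h)}) \<le> (\<epsilon> * real n) ^ n" .
  qed
qed

theorem proposition5p9:
  fixes S :: "nat list set"
  assumes "\<forall>p\<in>S. is_pattern p"
  shows "((\<lambda>n. root n (real (num_avoiding S n)) / real n) \<longlonglongrightarrow> 0) \<longleftrightarrow>
         ((\<exists>k>0. [1..<k+1] \<in> S) \<and> (\<exists>l>0. rev [1..<l+1] \<in> S))"
proof
  assume lim: "(\<lambda>n. root n (real (num_avoiding S n)) / real n) \<longlonglongrightarrow> 0"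
  show "(\<exists>k>0. [1..<k+1] \<in> S) \<and> (\<exists>l>0. rev [1..<l+1] \<in> S)"
  proof (rule ccontr)
    assume "\<not> ((\<exists>k>0. [1..<k+1] \<in> S) \<and> (\<exists>l>0. rev [1..<l+1] \<in> S))"
    then have no: "\<not> (\<exists>k>0. [1..<k+1] \<in> S) \<or> \<not> (\<exists>l>0. rev [1..<l+1] \<in> S)" by blast
    have lb: "root n (real (num_avoiding S n)) / real n \<ge> 1 / exp 1" if n1: "n \<ge> 1" for n
    proof -
      have "fact n \<le> num_avoiding S n" by (rule fact_avoid[OF assms no])
      then have "real (fact n) \<le> real (num_avoiding S n)" by (simp only: of_nat_le_iff)
      then have "(fact n :: real) \<le> real (num_avoiding S n)" by (simp only: of_nat_fact)
      then have "root n (fact n) \<le> root n (real (num_avoiding S n))" using n1 by simp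
      moreover have "real n / exp 1 \<le> root n (fact n)" using fact_lower n1 by simp
      ultimately have "real n / exp 1 \<le> root n (real (num_avoiding S n))" by linarith
      then show ?thesis using n1 by (simp add: field_simps)
    qed
    have "\<not> (\<lambda>n. root n (real (num_avoiding S n)) / real n) \<longlonglongrightarrow> 0"
      by (rule not_tendsto0[where c = "1 / exp 1"]) (use lb in auto)
    then show False using lim by blast
  qed
next
  assume "(\<exists>k>0. [1..<k+1] \<in> S) \<and> (\<exists>l>0. rev [1..<l+1] \<in> S)"
  then obtain k l where k: "k > 0" and inc: "[1..<k+1] \<in> S" and dec: "rev [1..<l+1] \<in> S" by blast
  define h where "h = 2^(k+l) - (1::nat)"
  have "(2::nat)^(k+l) \<ge> 2^1" using k by (intro power_increasing) auto
  then have h1: "h \<ge> 1" by (simp add: h_def)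
  have sub: "{par. is_forest n par \<and> avoids n par S} \<subseteq> {par. is_forest n par \<and> (\<forall>v\<in>{1..n}. ht par v \<le> h)}" for n
  proof
    fix par assume "par \<in> {par. is_forest n par \<and> avoids n par S}"
    then have F: "is_forest n par" and av: "avoids n par S" by auto
    have "\<forall>v\<in>{1..n}. ht par v \<le> h"
    proof
      fix v assume v: "v \<in> {1..n}"
      have "ht par v < 2^(k+l)" by (rule ht_bound[OF F av inc dec v])
      then show "ht par v \<le> h" by (simp add: h_def)
    qed
    then show "par \<in> {par. is_forest n par \<and> (\<forall>v\<in>{1..n}. ht par v \<le> h)}" using F by simp
  qed
  have finH: "finite {par. is_forest n par \<and> (\<forall>v\<in>{1..n}. ht par v \<le> h)}" for n
    by (rule finite_subset[OF _ finite_Fset[of n]]) (auto simp: forest_Fset)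
  show "(\<lambda>n. root n (real (num_avoiding S n)) / real n) \<longlonglongrightarrow> 0"
  proof (rule LIMSEQ_I)
    fix r :: real assume r: "r > 0"
    obtain N where N: "\<forall>n\<ge>N. real (card {par. is_forest n par \<and> (\<forall>v\<in>{1..n}. ht par v \<le> h)}) \<le> (r / 2 * real n) ^ n"
      using UB[OF h1, of "r/2"] r by auto
    show "\<exists>no. \<forall>n\<ge>no. norm (root n (real (num_avoiding S n)) / real n - 0) < r"
    proof (intro exI allI impI)
      fix n assume n: "n \<ge> max N 1"
      then have n1: "n \<ge> 1" and nN: "n \<ge> N" by auto
      have "num_avoiding S n \<le> card {par. is_forest n par \<and> (\<forall>v\<in>{1..n}. ht par v \<le> h)}"
        unfolding num_avoiding_def by (rule card_mono[OF finH sub])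
      then have "real (num_avoiding S n) \<le> (r / 2 * real n) ^ n" using N nN
        by (meson of_nat_le_iff order_trans)
      then have "root n (real (num_avoiding S n)) \<le> root n ((r / 2 * real n) ^ n)" using n1 by simp
      also have "\<dots> = r / 2 * real n" using n1 r by (intro real_root_pos2) auto
      finally have le: "root n (real (num_avoiding S n)) / real n \<le> r / 2" using n1 by (simp add: field_simps)
      have ge: "root n (real (num_avoiding S n)) / real n \<ge> 0"
        by (intro divide_nonneg_nonneg real_root_ge_zero) auto
      have "norm (root n (real (num_avoiding S n)) / real n - 0) = root n (real (num_avoiding S n)) / real n"
        using ge by (simp only: diff_zero real_norm_def abs_of_nonneg)
      then show "norm (root n (real (num_avoiding S n)) / real n - 0) < r" using le r by linarith
    qed
  qed
qed
end
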